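(* Let $\lambda$ be Lebesgue measure on $[0,1)$. For every sequence $(x_n)_{n\ge1}$ in $[0,1)$ and every scale sequence $(s_n)_{n\ge1}$, the function $\omega(x)=\liminf_{n\to\infty} s_n\,|x_n-x|$ satisfies $\omega(x)\in\{0,\infty\}$ for $\lambda$-almost every $x\in[0,1)$. That is, $\lambda$ is decisive.
   Context: A scale sequence is a sequence of positive reals $s_n$ with $s_n\to\infty$. A Borel probability measure $\nu$ on a metric space $(X,d)$ is decisive if for every sequence $(x_n)$ in $X$ and every scale sequence $(s_n)$, the function $\omega(x)=\liminf_n s_n d(x_n,x)$ lies in $\{0,\infty\}$ for $\nu$-a.e. $x$. *)

theory Defs
  imports "HOL-Analysis.Analysis"
begin

definition scale_seq :: "(nat \<Rightarrow> real) \<Rightarrow> bool" where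
  "scale_seq s \<longleftrightarrow> (\<forall>n. 0 < s n) \<and> filterlim s at_top sequentially"

definition decisive :: "'a measure \<Rightarrow> ('a \<Rightarrow> 'a \<Rightarrow> real) \<Rightarrow> bool" where
  "decisive M d \<longleftrightarrow>
     (\<forall>xs s. (\<forall>n. xs n \<in> space M) \<longrightarrow> scale_seq s \<longrightarrow>
        (AE x in M. liminf (\<lambda>n. ereal (s n * d (xs n) x)) \<in> {0, \<infinity>}))"

end

theory Submission imports Defs begin

lemma ball_em: "0 \<le> r \<Longrightarrow> emeasure lborel (ball (a::real) r) = ennreal (2*r)"
  by (simp add: ball_eq_greaterThanLessThan)

lemma frac_null:
  fixes S :: "real set"
  assumes S: "S \<in> sets borel" and fin: "emeasure lborel S < \<infinity>" and th: "\<theta> < 1" "0 \<le> \<theta>"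
  and H: "\<And>x d. x \<in> S \<Longrightarrow> 0 < d \<Longrightarrow> \<exists>a r. 0 < r \<and> r < d \<and> x \<in> ball a r \<and>
            emeasure lborel (S \<inter> ball a r) \<le> ennreal \<theta> * emeasure lborel (ball a r)"
  shows "S \<in> null_sets lborel"
proof -
  define m where "m = measure lborel S"
  have Sm: "emeasure lborel S = ennreal m" unfolding m_def
    using fin by (simp add: emeasure_eq_ennreal_measure)
  have m0: "0 \<le> m" unfolding m_def by simp
  have key: "m \<le> \<theta> * (m + \<eta>)" if eta: "\<eta> > 0" for \<eta>
  proof -
    obtain U where U: "open U" "S \<subseteq> U" "emeasure lborel (U - S) < \<eta>"
      using outer_regular_lborel[OF S eta] by blast
    define K where "K = {(a,r). 0 < r \<and> ball a r \<subseteq> U \<and>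
       emeasure lborel (S \<inter> ball a r) \<le> ennreal \<theta> * emeasure lborel (ball a r)}"
    have cov: "\<exists>i. i \<in> K \<and> x \<in> ball (fst i) (snd i) \<and> snd i < d" if xS: "x \<in> S" and d0: "0 < d" for x d
    proof -
      obtain \<epsilon> where e: "\<epsilon> > 0" "ball x \<epsilon> \<subseteq> U"
        using U(1,2) \<open>x \<in> S\<close> open_contains_ball by blast
      obtain a r where ar: "0 < r" "r < min d (\<epsilon>/2)" "x \<in> ball a r"
        "emeasure lborel (S \<inter> ball a r) \<le> ennreal \<theta> * emeasure lborel (ball a r)"
        using H[OF xS, of "min d (\<epsilon>/2)"] d0 e by auto
      have "ball a r \<subseteq> ball x \<epsilon>"
      proof
        fix y assume "y \<in> ball a r"
        then have "dist x y < \<epsilon>" using ar(2,3) dist_triangle[of x y a]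
          by (auto simp: dist_commute)
        then show "y \<in> ball x \<epsilon>" by simp
      qed
      then show ?thesis using ar e unfolding K_def by (intro exI[of _ "(a,r)"]) auto
    qed
    obtain C where C: "countable C" "C \<subseteq> K"
      "pairwise (\<lambda>i j. disjnt (ball (fst i) (snd i)) (ball (fst j) (snd j))) C"
      "negligible (S - (\<Union>i \<in> C. ball (fst i) (snd i)))"
      using Vitali_covering_theorem_balls[of S K fst snd, OF cov] by blast
    define B where "B i = ball (fst i) (snd i)" for i :: "real \<times> real"
    define N where "N = S - (\<Union>i \<in> C. B i)"
    have Bs: "\<And>i. B i \<in> sets lborel" by (simp add: B_def)
    have Nb: "N \<in> sets borel" unfolding N_def B_def using S
      by (intro sets.Diff) (auto intro!: borel_open)
    have "N \<in> null_sets lebesgue" using C(4) negligible_iff_null_sets unfolding N_def B_def by blast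
    then have Nn: "N \<in> null_sets lborel" using Nb null_sets_completion_iff[of N lborel] by simp
    have disj: "disjoint_family_on B C" using C(3) unfolding disjoint_family_on_def pairwise_def disjnt_def B_def
      by blast
    have disj2: "disjoint_family_on (\<lambda>i. S \<inter> B i) C" using disj unfolding disjoint_family_on_def by blast
    have eqS: "N \<union> (\<Union>i\<in>C. S \<inter> B i) = S" unfolding N_def by blast
    have "emeasure lborel S = emeasure lborel (N \<union> (\<Union>i\<in>C. S \<inter> B i))"
      by (simp only: eqS)
    also have "\<dots> \<le> emeasure lborel N + emeasure lborel (\<Union>i\<in>C. S \<inter> B i)"
      using S Nb C(1) by (intro emeasure_subadditive) (auto simp: B_def intro!: sets.countable_UN'')
    also have "\<dots> = emeasure lborel (\<Union>i\<in>C. S \<inter> B i)" using Nn by (simp add: null_setsD1)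
    also have "\<dots> = (\<integral>\<^sup>+i. emeasure lborel (S \<inter> B i) \<partial>count_space C)"
      using S C(1) disj2 by (intro emeasure_UN_countable) (auto simp: B_def)
    also have "\<dots> \<le> (\<integral>\<^sup>+i. ennreal \<theta> * emeasure lborel (B i) \<partial>count_space C)"
      using C(2) by (intro nn_integral_mono) (auto simp: K_def B_def)
    also have "\<dots> = ennreal \<theta> * (\<integral>\<^sup>+i. emeasure lborel (B i) \<partial>count_space C)"
      by (intro nn_integral_cmult) auto
    also have "(\<integral>\<^sup>+i. emeasure lborel (B i) \<partial>count_space C) = emeasure lborel (\<Union>i\<in>C. B i)"
      using C(1) disj by (intro emeasure_UN_countable[symmetric]) (use Bs in simp_all)
    also have "emeasure lborel (\<Union>i\<in>C. B i) \<le> emeasure lborel U"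
      using C(2) U(1) by (intro emeasure_mono) (fastforce simp: K_def B_def)+
    also have "emeasure lborel U \<le> emeasure lborel S + emeasure lborel (U - S)"
    proof -
      have "U = S \<union> (U - S)" using U(2) by blast
      then have "emeasure lborel U = emeasure lborel (S \<union> (U - S))" by simp
      also have "\<dots> \<le> emeasure lborel S + emeasure lborel (U - S)"
        using S U(1) by (intro emeasure_subadditive) auto
      finally show ?thesis .
    qed
    also have "\<dots> \<le> ennreal m + ennreal \<eta>" using Sm U(3) by (intro add_mono) auto
    finally have "ennreal m \<le> ennreal \<theta> * (ennreal m + ennreal \<eta>)"
      using Sm by (simp add: mult_left_mono)
    also have "\<dots> = ennreal (\<theta> * (m + \<eta>))"
      using m0 eta th by (simp add: ennreal_mult ennreal_plus)
    finally show ?thesis using m0 eta th by (simp add: ennreal_le_iff)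
  qed
  have "m = 0"
  proof (rule ccontr)
    assume "m \<noteq> 0"
    then have mp: "m > 0" using m0 by simp
    define \<eta> where "\<eta> = (1 - \<theta>) * m / 2"
    have ep: "\<eta> > 0" unfolding \<eta>_def using mp th by simp
    have "\<theta> * \<eta> \<le> \<eta>" using ep th by (simp add: mult_le_cancel_right1)
    have "m \<le> \<theta> * m + \<theta> * \<eta>" using key[OF ep] by (simp add: algebra_simps)
    also have "\<dots> \<le> \<theta> * m + \<eta>" using \<open>\<theta> * \<eta> \<le> \<eta>\<close> by simp
    also have "\<dots> = m - (1 - \<theta>) * m / 2" unfolding \<eta>_def by (simp add: algebra_simps)
    also have "\<dots> < m" using mp th by simp
    finally show False by simp
  qed
  then show ?thesis using Sm S by (intro null_setsI) auto
qed

definition Sset :: "(nat \<Rightarrow> real) \<Rightarrow> (nat \<Rightarrow> real) \<Rightarrow> real \<Rightarrow> real \<Rightarrow> nat \<Rightarrow> real set" where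
  "Sset xs s c c' N = {x \<in> {0..<1}. (\<forall>n\<ge>N. c' \<le> s n * dist (xs n) x) \<and>
      (\<exists>\<^sub>F n in sequentially. s n * dist (xs n) x < c)}"

lemma Sset_borel: "Sset xs s c c' N \<in> sets borel"
proof -
  have "Sset xs s c c' N = {0..<1} \<inter> (\<Inter>n\<in>{N..}. {x. c' \<le> s n * dist (xs n) x}) \<inter>
     (\<Inter>m. \<Union>n\<in>{m..}. {x. s n * dist (xs n) x < c})"
    unfolding Sset_def frequently_sequentially by auto
  also have "\<dots> \<in> sets borel" by measurable
  finally show ?thesis .
qed

lemma Sset_null:
  assumes sc: "scale_seq s" and c: "0 < c" and c': "0 < c'"
  shows "Sset xs s c c' N \<in> null_sets lborel"
proof (rule frac_null[where \<theta> = "c / (c + c')"])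
  let ?S = "Sset xs s c c' N"
  show "?S \<in> sets borel" by (rule Sset_borel)
  have "emeasure lborel ?S \<le> emeasure lborel {0..<1::real}"
    by (intro emeasure_mono) (auto simp: Sset_def)
  then show "emeasure lborel ?S < \<infinity>" by (simp add: le_less_trans)
  show "c / (c + c') < 1" "0 \<le> c / (c + c')" using c c' by auto
  have spos: "\<And>n. 0 < s n" and lim: "filterlim s at_top sequentially"
    using sc unfolding scale_seq_def by auto
  fix x and d :: real assume xS: "x \<in> ?S" and d: "0 < d"
  have fr: "\<exists>\<^sub>F n in sequentially. s n * dist (xs n) x < c"
    and ev1: "\<forall>n\<ge>N. c' \<le> s n * dist (xs n) x" using xS unfolding Sset_def by auto
  have ev2: "\<forall>\<^sub>F n in sequentially. (c + c') / d < s n"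
    using lim unfolding filterlim_at_top_dense by blast
  have ev3: "\<forall>\<^sub>F n in sequentially. N \<le> n" by (rule eventually_ge_at_top)
  have "\<exists>\<^sub>F n in sequentially. s n * dist (xs n) x < c \<and> ((c + c') / d < s n \<and> N \<le> n)"
    using frequently_eventually_frequently[OF fr eventually_conj[OF ev2 ev3]] .
  then obtain n where n: "s n * dist (xs n) x < c" "(c + c') / d < s n" "N \<le> n"
    using frequently_ex by blast
  define r where "r = (c + c') / s n"
  define \<rho> where "\<rho> = c' / s n"
  have sn: "0 < s n" by (rule spos)
  have r0: "0 < r" "0 < \<rho>" unfolding r_def \<rho>_def using sn c c' by auto
  have rd: "r < d" unfolding r_def using n(2) sn d by (simp add: divide_less_eq mult.commute)
  have dx: "dist (xs n) x < c / s n" using n(1) sn by (simp add: less_divide_eq mult.commute)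
  have sub1: "?S \<inter> ball x r \<subseteq> ball x r - ball (xs n) \<rho>"
  proof safe
    fix y assume "y \<in> ?S" "y \<in> ball (xs n) \<rho>"
    then have "c' \<le> s n * dist (xs n) y" "dist (xs n) y < c' / s n"
      using n(3) unfolding Sset_def \<rho>_def by auto
    then show False using sn by (simp add: less_divide_eq mult.commute)
  qed
  have sub2: "ball (xs n) \<rho> \<subseteq> ball x r"
  proof
    fix y assume "y \<in> ball (xs n) \<rho>"
    then have "dist x y < c / s n + c' / s n"
      using dx dist_triangle[of x y "xs n"] unfolding \<rho>_def by (simp add: dist_commute)
    then show "y \<in> ball x r" unfolding r_def by (simp add: add_divide_distrib)
  qed
  have "emeasure lborel (?S \<inter> ball x r) \<le> emeasure lborel (ball x r - ball (xs n) \<rho>)"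
    using sub1 by (intro emeasure_mono) auto
  also have "\<dots> = emeasure lborel (ball x r) - emeasure lborel (ball (xs n) \<rho>)"
    using sub2 r0 by (intro emeasure_Diff) (auto simp: ball_em[OF less_imp_le[OF r0(2)]])
  also have "\<dots> = ennreal (2 * r - 2 * \<rho>)"
    using r0 by (simp add: ball_em ennreal_minus)
  also have "2 * r - 2 * \<rho> = c / (c + c') * (2 * r)"
  proof -
    have "0 < c * s n + c' * s n" using sn c c' by (intro add_pos_pos mult_pos_pos)
    moreover have "c + c' \<noteq> 0" "s n \<noteq> 0" using sn c c' by auto
    ultimately have "c + c' \<noteq> 0" "s n \<noteq> 0" "c * s n + c' * s n \<noteq> 0" by auto
    then show ?thesis unfolding r_def \<rho>_def by (simp add: field_simps)
  qed
  also have "ennreal (c / (c + c') * (2 * r)) = ennreal (c / (c + c')) * emeasure lborel (ball x r)"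
    using r0 c c' by (simp only: ball_em[OF less_imp_le[OF r0(1)]]) (rule ennreal_mult, auto)
  finally show "\<exists>a r. 0 < r \<and> r < d \<and> x \<in> ball a r \<and>
     emeasure lborel (?S \<inter> ball a r) \<le> ennreal (c / (c + c')) * emeasure lborel (ball a r)"
    using r0 rd by (intro exI[of _ x] exI[of _ r]) auto
qed

theorem proposition5p2:
  shows "decisive (restrict_space lborel {0..<1::real}) dist"
  unfolding decisive_def
proof (intro allI impI)
  fix xs :: "nat \<Rightarrow> real" and s
  assume "\<forall>n. xs n \<in> space (restrict_space lborel {0..<1::real})"
  assume sc: "scale_seq s"
  have spos: "\<And>n. 0 < s n" using sc unfolding scale_seq_def by auto
  let ?I = "\<rat> \<times> \<rat> \<times> (UNIV :: nat set)"
  define F where "F = (\<lambda>(c, c', N). if 0 < c \<and> 0 < c' then Sset xs s c c' N else {})"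
  have Fn: "(\<Union>i\<in>?I. F i) \<in> null_sets lborel"
    by (intro null_sets_UN') (auto simp: F_def countable_rat Sset_null[OF sc])
  have "AE x in lborel. x \<in> {0..<1} \<longrightarrow> liminf (\<lambda>n. ereal (s n * dist (xs n) x)) \<in> {0, \<infinity>}"
  proof (rule AE_I'[OF Fn], rule subsetI)
    fix x :: real
    assume xin: "x \<in> {x \<in> space lborel. \<not> (x \<in> {0..<1} \<longrightarrow> liminf (\<lambda>n. ereal (s n * dist (xs n) x)) \<in> {0, \<infinity>})}"
    then have x: "x \<in> {0..<1}"
      and n0: "liminf (\<lambda>n. ereal (s n * dist (xs n) x)) \<noteq> 0"
      and ni: "liminf (\<lambda>n. ereal (s n * dist (xs n) x)) \<notin> {\<infinity>}" by auto
    define L where "L = liminf (\<lambda>n. ereal (s n * dist (xs n) x))"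
    have L0: "0 \<le> L" unfolding L_def
      by (intro Liminf_bounded always_eventually allI) (auto intro!: mult_nonneg_nonneg less_imp_le[OF spos])
    obtain l where l: "L = ereal l" "0 < l" using L0 n0 ni unfolding L_def[symmetric]
      by (cases L) auto
    obtain c' where c': "c' \<in> \<rat>" "0 < c'" "c' < l" using Rats_dense_in_real[OF l(2)] by blast
    obtain c where c: "c \<in> \<rat>" "l < c" "c < l + 1" using Rats_dense_in_real[of l "l+1"] by auto
    have "eventually (\<lambda>n. ereal c' < ereal (s n * dist (xs n) x)) sequentially"
      using c' l by (intro less_LiminfD) (simp add: L_def[symmetric])
    then obtain N where N: "\<forall>n\<ge>N. c' \<le> s n * dist (xs n) x"
      unfolding eventually_sequentially by (auto intro: less_imp_le)
    have fr: "\<exists>\<^sub>F n in sequentially. s n * dist (xs n) x < c"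
    proof (rule ccontr)
      assume "\<not> ?thesis"
      then have "eventually (\<lambda>n. ereal c \<le> ereal (s n * dist (xs n) x)) sequentially"
        unfolding not_frequently by (auto elim!: eventually_mono)
      then have "ereal c \<le> L" unfolding L_def by (rule Liminf_bounded)
      then show False using l c by simp
    qed
    have "x \<in> F (c, c', N)" using x N fr c c' l unfolding F_def Sset_def by auto
    then show "x \<in> (\<Union>i\<in>?I. F i)" using c c' by blast
  qed
  then show "AE x in restrict_space lborel {0..<1::real}. liminf (\<lambda>n. ereal (s n * dist (xs n) x)) \<in> {0, \<infinity>}"
    by (subst AE_restrict_space_iff) auto
qed

end
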